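(* Let $S$ be a polynomial ring over a field and let $I$, $J \subseteq S$ be ideals that can be written as $I = L_I + Q_I$ and $J = L_J + Q_J$, where (1) $L_I$ and $L_J$ are generated by disjoint sets of variables; (2) $Q_J$ is generated by quadratic monomials, none of which is divisible by a generator of $L_J$; (3) $Q_I \subseteq J$; (4) $Q_J \subseteq I$. Then $I \cap J = L_IL_J + Q_I + Q_J$. *)

theory Defs
  imports "HOL-Library.Poly_Mapping"
begin

text \<open>Polynomial ring over a field k in the variables of type 'v:
  a polynomial is a finitely supported map from monomials (exponent vectors,
  finitely supported maps 'v to nat) to coefficients.\<close>

type_synonym ('v, 'k) mpoly = "('v \<Rightarrow>\<^sub>0 nat) \<Rightarrow>\<^sub>0 'k"

definition mvar :: "'v \<Rightarrow> ('v, 'k::comm_ring_1) mpoly" where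
  "mvar x = Poly_Mapping.single (Poly_Mapping.single x 1) 1"

definition mmonom :: "('v \<Rightarrow>\<^sub>0 nat) \<Rightarrow> ('v, 'k::comm_ring_1) mpoly" where
  "mmonom m = Poly_Mapping.single m 1"

definition mdeg :: "('v \<Rightarrow>\<^sub>0 nat) \<Rightarrow> nat" where
  "mdeg m = sum (Poly_Mapping.lookup m) (Poly_Mapping.keys m)"

definition is_ideal :: "'a::comm_ring_1 set \<Rightarrow> bool" where
  "is_ideal I \<longleftrightarrow> 0 \<in> I \<and> (\<forall>a\<in>I. \<forall>b\<in>I. a + b \<in> I) \<and> (\<forall>r. \<forall>a\<in>I. r * a \<in> I)"

definition gen_ideal :: "'a::comm_ring_1 set \<Rightarrow> 'a set" where
  "gen_ideal G = \<Inter>{I. is_ideal I \<and> G \<subseteq> I}"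

definition ideal_sum :: "'a::comm_ring_1 set \<Rightarrow> 'a set \<Rightarrow> 'a set" where
  "ideal_sum A B = {a + b | a b. a \<in> A \<and> b \<in> B}"

definition ideal_prod :: "'a::comm_ring_1 set \<Rightarrow> 'a set \<Rightarrow> 'a set" where
  "ideal_prod A B = gen_ideal {a * b | a b. a \<in> A \<and> b \<in> B}"

end

theory Submission
  imports Defs
begin

lemma is_ideal_gen: "is_ideal (gen_ideal G)"
  unfolding gen_ideal_def is_ideal_def by auto

lemma gen_ideal_sub: "G \<subseteq> gen_ideal G"
  unfolding gen_ideal_def by auto

lemma gen_ideal_least: "is_ideal I \<Longrightarrow> G \<subseteq> I \<Longrightarrow> gen_ideal G \<subseteq> I"
  unfolding gen_ideal_def by auto

lemma ideal_zero: "is_ideal I \<Longrightarrow> 0 \<in> I"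
  unfolding is_ideal_def by auto
lemma ideal_add: "is_ideal I \<Longrightarrow> a \<in> I \<Longrightarrow> b \<in> I \<Longrightarrow> a + b \<in> I"
  unfolding is_ideal_def by auto
lemma ideal_mult: "is_ideal I \<Longrightarrow> a \<in> I \<Longrightarrow> r * a \<in> I"
  unfolding is_ideal_def by auto
lemma ideal_mult2: "is_ideal I \<Longrightarrow> a \<in> I \<Longrightarrow> a * r \<in> I"
  unfolding is_ideal_def by (metis mult.commute)
lemma ideal_neg: "is_ideal I \<Longrightarrow> a \<in> I \<Longrightarrow> - a \<in> I"
  using ideal_mult[of I a "-1"] by simp
lemma ideal_diff: "is_ideal I \<Longrightarrow> a \<in> I \<Longrightarrow> b \<in> I \<Longrightarrow> a - b \<in> I"
  using ideal_add[of I a "-b"] ideal_neg[of I b] by simp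

lemma ideal_sum_fin: "is_ideal I \<Longrightarrow> (\<And>x. x \<in> A \<Longrightarrow> f x \<in> I) \<Longrightarrow> sum f A \<in> I"
proof (induction A rule: infinite_finite_induct)
  case (infinite A) then show ?case by (simp add: ideal_zero)
next
  case empty then show ?case by (simp add: ideal_zero)
next
  case (insert x F) then show ?case by (simp add: ideal_add)
qed

lemma is_ideal_sum: "is_ideal A \<Longrightarrow> is_ideal B \<Longrightarrow> is_ideal (ideal_sum A B)"
  unfolding is_ideal_def ideal_sum_def
proof (intro conjI ballI allI)
  assume A: "0 \<in> A \<and> (\<forall>a\<in>A. \<forall>b\<in>A. a + b \<in> A) \<and> (\<forall>r. \<forall>a\<in>A. r * a \<in> A)"
    and B: "0 \<in> B \<and> (\<forall>a\<in>B. \<forall>b\<in>B. a + b \<in> B) \<and> (\<forall>r. \<forall>a\<in>B. r * a \<in> B)"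
  show "0 \<in> {a + b |a b. a \<in> A \<and> b \<in> B}" using A B by force
  fix x y assume "x \<in> {a + b |a b. a \<in> A \<and> b \<in> B}" "y \<in> {a + b |a b. a \<in> A \<and> b \<in> B}"
  then obtain a1 b1 a2 b2 where "x = a1 + b1" "y = a2 + b2" "a1 \<in> A" "a2 \<in> A" "b1 \<in> B" "b2 \<in> B" by blast
  moreover have "x + y = (a1 + a2) + (b1 + b2)" using calculation by (simp add: algebra_simps)
  ultimately show "x + y \<in> {a + b |a b. a \<in> A \<and> b \<in> B}" using A B by blast
next
  fix r x
  assume A: "0 \<in> A \<and> (\<forall>a\<in>A. \<forall>b\<in>A. a + b \<in> A) \<and> (\<forall>r. \<forall>a\<in>A. r * a \<in> A)"
    and B: "0 \<in> B \<and> (\<forall>a\<in>B. \<forall>b\<in>B. a + b \<in> B) \<and> (\<forall>r. \<forall>a\<in>B. r * a \<in> B)"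
    and "x \<in> {a + b |a b. a \<in> A \<and> b \<in> B}"
  then obtain a1 b1 where "x = a1 + b1" "a1 \<in> A" "b1 \<in> B" by blast
  moreover have "r * x = r * a1 + r * b1" using calculation by (simp add: algebra_simps)
  ultimately show "r * x \<in> {a + b |a b. a \<in> A \<and> b \<in> B}" using A B by blast
qed

lemma ideal_sum_sub: "is_ideal C \<Longrightarrow> A \<subseteq> C \<Longrightarrow> B \<subseteq> C \<Longrightarrow> ideal_sum A B \<subseteq> C"
  unfolding ideal_sum_def using ideal_add by blast

lemma ideal_sum_left: "is_ideal B \<Longrightarrow> A \<subseteq> ideal_sum A B"
  unfolding ideal_sum_def using ideal_zero by force
lemma ideal_sum_right: "is_ideal A \<Longrightarrow> B \<subseteq> ideal_sum A B"
  unfolding ideal_sum_def using ideal_zero by force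

definition msetG :: "('v \<Rightarrow>\<^sub>0 nat) set \<Rightarrow> ('v, 'k::field) mpoly set" where
  "msetG G = {p. \<forall>m\<in>Poly_Mapping.keys p. \<exists>g\<in>G. \<exists>h. m = g + h}"

lemma msetG_ideal: "is_ideal (msetG G)"
  unfolding is_ideal_def msetG_def
proof (intro conjI ballI allI; clarsimp?)
  fix a b :: "('a, 'b) mpoly" and m
  assume a: "\<forall>m\<in>Poly_Mapping.keys a. \<exists>g\<in>G. \<exists>h. m = g + h"
    and b: "\<forall>m\<in>Poly_Mapping.keys b. \<exists>g\<in>G. \<exists>h. m = g + h"
    and m: "m \<in> Poly_Mapping.keys (a + b)"
  then show "\<exists>g\<in>G. \<exists>h. m = g + h" using keys_add[of a b] by blast
next
  fix r a :: "('a, 'b) mpoly" and m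
  assume a: "\<forall>m\<in>Poly_Mapping.keys a. \<exists>g\<in>G. \<exists>h. m = g + h"
    and m: "m \<in> Poly_Mapping.keys (r * a)"
  then obtain u v where "m = u + v" "v \<in> Poly_Mapping.keys a" using keys_mult[of r a] by blast
  then show "\<exists>g\<in>G. \<exists>h. m = g + h" using a
    by (metis add.commute add.left_commute)
qed

lemma gen_msetG: "gen_ideal (mmonom ` G) \<subseteq> (msetG G :: ('v, 'k::field) mpoly set)"
  apply (rule gen_ideal_least[OF msetG_ideal])
  unfolding msetG_def mmonom_def by (auto intro!: exI[of _ 0])

lemma msetG_mono: "G \<subseteq> H \<Longrightarrow> msetG G \<subseteq> msetG H"
  unfolding msetG_def by blast

lemma mvar_mmonom: "mvar x = mmonom (Poly_Mapping.single x 1)"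
  unfolding mvar_def mmonom_def by simp

lemma poly_decomp: "(p :: ('a \<Rightarrow>\<^sub>0 'b::comm_monoid_add)) =
   (\<Sum>m\<in>Poly_Mapping.keys p. Poly_Mapping.single m (Poly_Mapping.lookup p m))"
proof (rule poly_mapping_eqI)
  fix k
  show "Poly_Mapping.lookup p k = Poly_Mapping.lookup (\<Sum>m\<in>Poly_Mapping.keys p. Poly_Mapping.single m (Poly_Mapping.lookup p m)) k"
    by (cases "k \<in> Poly_Mapping.keys p")
       (simp_all add: lookup_sum lookup_single when_def in_keys_iff)
qed

lemma split_var: "0 < Poly_Mapping.lookup m x \<Longrightarrow>
   m = Poly_Mapping.single x (1::nat) + (m - Poly_Mapping.single x 1)"
  by (rule poly_mapping_eqI) (auto simp add: lookup_add lookup_minus lookup_single when_def)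

lemma lookup_pos: "m = Poly_Mapping.single x (1::nat) + h \<Longrightarrow> 0 < Poly_Mapping.lookup m x"
  by (simp add: lookup_add lookup_single)

lemma mvar_image: "mvar ` V = mmonom ` ((\<lambda>x. Poly_Mapping.single x 1) ` V)"
  by (auto simp: mvar_mmonom)

theorem lemma1p5:
  fixes I J LI LJ QI QJ :: "('v::finite, 'k::field) mpoly set"
    and VI VJ :: "'v set"
    and GJ :: "('v \<Rightarrow>\<^sub>0 nat) set"
  assumes LI_def: "LI = gen_ideal (mvar ` VI)"
    and LJ_def: "LJ = gen_ideal (mvar ` VJ)"
    and disj: "VI \<inter> VJ = {}"
    and QI_ideal: "is_ideal QI"
    and QJ_def: "QJ = gen_ideal (mmonom ` GJ)"
    and GJ_quad: "\<forall>m\<in>GJ. mdeg m = 2"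
    and GJ_notdiv: "\<forall>m\<in>GJ. \<forall>x\<in>VJ. Poly_Mapping.lookup m x = 0"
    and I_def: "I = ideal_sum LI QI"
    and J_def: "J = ideal_sum LJ QJ"
    and QI_sub: "QI \<subseteq> J"
    and QJ_sub: "QJ \<subseteq> I"
  shows "I \<inter> J = ideal_sum (ideal_sum (ideal_prod LI LJ) QI) QJ"
proof -
  define sx :: "'v \<Rightarrow> ('v \<Rightarrow>\<^sub>0 nat)" where "sx x = Poly_Mapping.single x 1" for x
  have LIi: "is_ideal LI" and LJi: "is_ideal LJ" and QJi: "is_ideal QJ"
    using LI_def LJ_def QJ_def is_ideal_gen by auto
  have Ii: "is_ideal I" using I_def is_ideal_sum[OF LIi QI_ideal] by simp
  have Ji: "is_ideal J" using J_def is_ideal_sum[OF LJi QJi] by simp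
  have IJi: "is_ideal (I \<inter> J)" using Ii Ji unfolding is_ideal_def by auto
  have LII: "LI \<subseteq> I" using I_def ideal_sum_left[OF QI_ideal] by simp
  have LJJ: "LJ \<subseteq> J" using J_def ideal_sum_left[OF QJi] by simp
  have QJJ: "QJ \<subseteq> J" using J_def ideal_sum_right[OF LJi] by simp
  have QII: "QI \<subseteq> I" using I_def ideal_sum_right[OF LIi] by simp
  have prodi: "is_ideal (ideal_prod LI LJ)" unfolding ideal_prod_def by (rule is_ideal_gen)
  have prod_sub: "ideal_prod LI LJ \<subseteq> I \<inter> J"
    unfolding ideal_prod_def
  proof (rule gen_ideal_least[OF IJi], clarify)
    fix a b assume "a \<in> LI" "b \<in> LJ"
    then show "a * b \<in> I \<inter> J" using LII LJJ ideal_mult ideal_mult2 Ii Ji by blast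
  qed
  have sup: "ideal_sum (ideal_sum (ideal_prod LI LJ) QI) QJ \<subseteq> I \<inter> J"
    apply (rule ideal_sum_sub[OF IJi])
     apply (rule ideal_sum_sub[OF IJi])
    using prod_sub QI_sub QII QJ_sub QJJ by auto
  have LI_m: "LI \<subseteq> msetG (sx ` VI)"
    unfolding sx_def LI_def mvar_image by (rule gen_msetG)
  have J_m: "J \<subseteq> msetG (sx ` VJ \<union> GJ)"
  proof -
    have "LJ \<subseteq> msetG (sx ` VJ)"
      unfolding sx_def LJ_def mvar_image by (rule gen_msetG)
    also have "\<dots> \<subseteq> msetG (sx ` VJ \<union> GJ)" by (rule msetG_mono) auto
    finally have 1: "LJ \<subseteq> msetG (sx ` VJ \<union> GJ)" .
    have "QJ \<subseteq> msetG GJ" using gen_msetG QJ_def by auto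
    also have "\<dots> \<subseteq> msetG (sx ` VJ \<union> GJ)" by (rule msetG_mono) auto
    finally have 2: "QJ \<subseteq> msetG (sx ` VJ \<union> GJ)" .
    show ?thesis unfolding J_def by (rule ideal_sum_sub[OF msetG_ideal 1 2])
  qed
  have key: "\<exists>a b. a \<in> ideal_prod LI LJ \<and> b \<in> QJ \<and> l = a + b" if lI: "l \<in> LI" and lJ: "l \<in> J" for l
  proof -
    define D where "D = {m. \<exists>g\<in>GJ. \<exists>h. m = g + h}"
    define t where "t m = Poly_Mapping.single m (Poly_Mapping.lookup l m)" for m
    define a where "a = sum t (Poly_Mapping.keys l - D)"
    define b where "b = sum t (Poly_Mapping.keys l \<inter> D)"
    have "l = sum t (Poly_Mapping.keys l)" unfolding t_def by (rule poly_decomp)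
    also have "\<dots> = b + a" unfolding a_def b_def
      by (rule sum.Int_Diff) simp
    finally have lab: "l = a + b" by (simp add: add.commute)
    have "b \<in> QJ" unfolding b_def
    proof (rule ideal_sum_fin[OF QJi])
      fix m assume "m \<in> Poly_Mapping.keys l \<inter> D"
      then obtain g h where g: "g \<in> GJ" "m = g + h" unfolding D_def by auto
      have "t m = Poly_Mapping.single h (Poly_Mapping.lookup l m) * mmonom g"
        unfolding t_def mmonom_def by (simp add: mult_single g(2) add.commute)
      moreover have "mmonom g \<in> QJ" using g QJ_def gen_ideal_sub by blast
      ultimately show "t m \<in> QJ" using ideal_mult[OF QJi] by simp
    qed
    moreover have "a \<in> ideal_prod LI LJ" unfolding a_def
    proof (rule ideal_sum_fin[OF prodi])
      fix m assume m: "m \<in> Poly_Mapping.keys l - D"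
      have mk: "m \<in> Poly_Mapping.keys l" and mD: "m \<notin> D" using m by auto
      have "l \<in> msetG (sx ` VI)" using lI LI_m by (rule subsetD[rotated])
      then have "\<forall>m\<in>Poly_Mapping.keys l. \<exists>g\<in>sx ` VI. \<exists>h. m = g + h"
        by (simp add: msetG_def)
      then obtain g h1 where "g \<in> sx ` VI" "m = g + h1" using mk by blast
      then obtain x where x: "x \<in> VI" "m = sx x + h1" by blast
      have "l \<in> msetG (sx ` VJ \<union> GJ)" using lJ J_m by (rule subsetD[rotated])
      then have "\<forall>m\<in>Poly_Mapping.keys l. \<exists>g\<in>sx ` VJ \<union> GJ. \<exists>h. m = g + h"
        by (simp add: msetG_def)
      then obtain g' h2 where g': "g' \<in> sx ` VJ \<union> GJ" "m = g' + h2" using mk by blast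
      have "g' \<notin> GJ" using g' mD unfolding D_def by blast
      then obtain y where y: "y \<in> VJ" "m = sx y + h2" using g' by blast
      have xy: "x \<noteq> y" using x y disj by auto
      have "0 < Poly_Mapping.lookup m y" using y(2) unfolding sx_def by (rule lookup_pos)
      moreover have "Poly_Mapping.lookup m y = Poly_Mapping.lookup h1 y"
        unfolding x(2) sx_def using xy by (simp add: lookup_add lookup_single)
      ultimately have "0 < Poly_Mapping.lookup h1 y" by simp
      then have h1: "h1 = sx y + (h1 - sx y)" unfolding sx_def by (rule split_var)
      define h3 where "h3 = h1 - sx y"
      have h1': "h1 = sx y + h3" using h1 unfolding h3_def .
      have meq0: "m = sx x + (sx y + h3)" using x(2) unfolding h1' .
      have meq: "m = h3 + sx x + sx y" using meq0 by (simp add: add_ac)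
      have "t m = (Poly_Mapping.single h3 (Poly_Mapping.lookup l m) * mvar x) * mvar y"
        unfolding t_def mvar_def by (simp add: mult_single meq sx_def)
      moreover have "Poly_Mapping.single h3 (Poly_Mapping.lookup l m) * mvar x \<in> LI"
        using ideal_mult[OF LIi] x LI_def gen_ideal_sub by blast
      moreover have "mvar y \<in> LJ" using y LJ_def gen_ideal_sub by blast
      ultimately have "t m \<in> {a * b | a b. a \<in> LI \<and> b \<in> LJ}" by blast
      then show "t m \<in> ideal_prod LI LJ"
        unfolding ideal_prod_def using gen_ideal_sub by (rule subsetD[rotated])
    qed
    ultimately show ?thesis using lab by blast
  qed
  have sub: "I \<inter> J \<subseteq> ideal_sum (ideal_sum (ideal_prod LI LJ) QI) QJ"
  proof
    fix f assume f: "f \<in> I \<inter> J"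
    then obtain l q where lq: "l \<in> LI" "q \<in> QI" "f = l + q" using I_def ideal_sum_def by blast
    have "l = f - q" using lq by simp
    moreover have "f - q \<in> J" using f lq QI_sub ideal_diff[OF Ji] by blast
    ultimately have "l \<in> J" by simp
    then obtain a b where ab: "a \<in> ideal_prod LI LJ" "b \<in> QJ" "l = a + b" using key lq by blast
    have "f = (a + q) + b" using ab lq by (simp add: algebra_simps)
    then show "f \<in> ideal_sum (ideal_sum (ideal_prod LI LJ) QI) QJ"
      unfolding ideal_sum_def using ab lq by blast
  qed
  show ?thesis using sub sup by blast
qed

end
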